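(* Let $E/\mathbb{F}_q$, $r\ge2$, $\mathcal{G}$, $F=E^{\mathcal{G}}$, the places $Q_0,\dots,Q_s$, $P_{u,v}$, and the functions $z,\omega_0,\dots,\omega_{r-1}$ be as in the context, and let $1\le t\le s$. For $\mathbf a=(a_{i,j})$ let $$f_{\mathbf a}=\sum_{j=1}^{t}a_{0,j}z^{j-1}+\sum_{i=1}^{r-1}\Big(\sum_{j=1}^{t-1}a_{i,j}z^{j-1}\Big)\omega_i\in V_E .$$ Fix $u\in\{1,\dots,s\}$ and suppose that every $r\times r$ submatrix of $M_u$ is invertible and every $(r-1)\times(r-1)$ submatrix of the $(r+1)\times(r-1)$ matrix $M'_u=(\omega_i(P_{u,v}))_{1\le v\le r+1,\,1\le i\le r-1}$ is invertible. For $f_{\mathbf a}\in V_E$ consider the vector $$B_u(\mathbf a)=\Big(f_{\mathbf a}(P_{u,1}),\dots,f_{\mathbf a}(P_{u,r+1}),\ \sum_{j=1}^ta_{0,j}z(Q_u)^{j-1}\Big)\in\mathbb{F}_q^{r+2}.$$ Then for any two positions of $B_u(\mathbf a)$, the entries in these two positions are uniquely determined by the remaining $r$ entries; that is, if $B_u(\mathbf a)$ and $B_u(\mathbf b)$ agree in $r$ positions, they agree everywhere.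
   Context: $E/\mathbb{F}_q$ is an elliptic function field with full constant field $\mathbb{F}_q$; $\mathcal{G}\subseteq\mathrm{Aut}(E/\mathbb{F}_q)$ is a subgroup of order $r+1$ with fixed field $F=E^{\mathcal{G}}$ a rational function field; $Q_0,Q_1,\dots,Q_s$ are distinct rational places of $F$ splitting completely in $E/F$, and $P_{u,1},\dots,P_{u,r+1}$ are the places of $E$ over $Q_u$. $z\in F$ satisfies $F=\mathbb{F}_q(z)$ and $(z)_\infty=P_{0,1}+\cdots+P_{0,r+1}$ in $E$; $\omega_0=1$ and $\omega_1,\dots,\omega_{r-1}\in E$ satisfy $(\omega_i)_\infty=P_{0,1}+\cdots+P_{0,i+1}$ and $\omega_0,\dots,\omega_{r-1}$ are linearly independent over $F$. $M_u$ is the $(r+1)\times r$ matrix $(\omega_i(P_{u,v}))_{1\le v\le r+1,\,0\le i\le r-1}$. $V_E$ is the $\mathbb{F}_q$-space of all $f_{\mathbf a}$ as displayed, of dimension $rt-r+1$. *)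

theory Defs
  imports "Jordan_Normal_Form.DL_Submatrix" "Jordan_Normal_Form.Matrix"
begin

text \<open>Abstract model of the places P_{u,1},...,P_{u,r+1} of E over Q_u (u >= 1).
  Places are indexed 0..r (place v stands for P_{u,v+1}); exponents j-1 are shifted to j.\<close>

definition f_vec :: "('k \<Rightarrow> 'e::field) \<Rightarrow> 'e \<Rightarrow> (nat \<Rightarrow> 'e) \<Rightarrow> nat \<Rightarrow> nat \<Rightarrow> (nat \<Rightarrow> nat \<Rightarrow> 'k) \<Rightarrow> 'e" where
  "f_vec emb z \<omega> r t a =
     (\<Sum>j<t. emb (a 0 j) * z ^ j) +
     (\<Sum>i\<in>{1..r-1}. (\<Sum>j<t-1. emb (a i j) * z ^ j) * \<omega> i)"

definition M_mat :: "(nat \<Rightarrow> 'e \<Rightarrow> 'k) \<Rightarrow> (nat \<Rightarrow> 'e) \<Rightarrow> nat \<Rightarrow> 'k mat" where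
  "M_mat ev \<omega> r = mat (r+1) r (\<lambda>(v,i). ev v (\<omega> i))"

definition M'_mat :: "(nat \<Rightarrow> 'e \<Rightarrow> 'k) \<Rightarrow> (nat \<Rightarrow> 'e) \<Rightarrow> nat \<Rightarrow> 'k mat" where
  "M'_mat ev \<omega> r = mat (r+1) (r-1) (\<lambda>(v,i). ev v (\<omega> (i+1)))"

definition B_vec :: "(nat \<Rightarrow> 'e::field \<Rightarrow> 'k::field) \<Rightarrow> ('k \<Rightarrow> 'e) \<Rightarrow> 'e \<Rightarrow> 'k \<Rightarrow> (nat \<Rightarrow> 'e)
     \<Rightarrow> nat \<Rightarrow> nat \<Rightarrow> (nat \<Rightarrow> nat \<Rightarrow> 'k) \<Rightarrow> nat \<Rightarrow> 'k" where
  "B_vec ev emb z zQ \<omega> r t a k =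
     (if k \<le> r then ev k (f_vec emb z \<omega> r t a) else (\<Sum>j<t. a 0 j * zQ ^ j))"

end

theory Submission
  imports Defs
begin


lemma pick_lessThan:
  assumes "j < n" shows "pick {..<n} j = j"
proof -
  have c: "j < card {..<n}" using assms by simp
  have p: "pick {..<n} j < n" using pick_in_set_le[OF c] by simp
  have "card {a\<in>{..<n}. a < pick {..<n} j} = j" using card_pick_le[OF c] .
  moreover have "{a\<in>{..<n}. a < pick {..<n} j} = {..<pick {..<n} j}"
  proof (rule Set.set_eqI)
    fix a show "a \<in> {a\<in>{..<n}. a < pick {..<n} j} \<longleftrightarrow> a \<in> {..<pick {..<n} j}"
      using p by (simp only: mem_Collect_eq lessThan_iff) linarith
  qed
  ultimately have "card {..<pick {..<n} j} = j" by simp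
  then show ?thesis by (simp only: card_lessThan)
qed

lemma invertible_kernel:
  fixes A :: "'a::field mat"
  assumes "invertible_mat A" "A \<in> carrier_mat n n" "x \<in> carrier_vec n" "A *\<^sub>v x = 0\<^sub>v n"
  shows "x = 0\<^sub>v n"
proof -
  obtain B where B: "A * B = 1\<^sub>m (dim_row A)" "B * A = 1\<^sub>m (dim_row B)"
    using assms(1) unfolding invertible_mat_def inverts_mat_def by blast
  have dA: "dim_row A = n" "dim_col A = n" using assms(2) by auto
  have "dim_col (A * B) = n" using B(1) dA by simp
  then have dBc: "dim_col B = n" by simp
  have "dim_col (B * A) = dim_row B" using B(2) by simp
  then have dBr: "dim_row B = n" using dA by simp
  have Bc: "B \<in> carrier_mat n n" using dBr dBc by (rule carrier_matI)
  have "x = 1\<^sub>m n *\<^sub>v x" using assms(3) by (rule one_mult_mat_vec[symmetric])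
  also have "\<dots> = (B * A) *\<^sub>v x" using B(2) dBr by simp
  also have "\<dots> = B *\<^sub>v (A *\<^sub>v x)" by (rule assoc_mult_mat_vec[OF Bc assms(2,3)])
  also have "\<dots> = B *\<^sub>v 0\<^sub>v n" using assms(4) by simp
  also have "\<dots> = 0\<^sub>v n" using Bc by auto
  finally show ?thesis .
qed

lemma kernel_sub:
  fixes M :: "'a::field mat" and x :: "nat \<Rightarrow> 'a"
  assumes dr: "dim_row M = N" and dc: "dim_col M = m"
    and I: "I \<subseteq> {..<N}" "card I = m"
    and inv: "invertible_mat (submatrix M I {..<m})"
    and eq: "\<And>v. v \<in> I \<Longrightarrow> (\<Sum>j<m. M $$ (v,j) * x j) = 0"
  shows "\<forall>j<m. x j = 0"
proof -
  define A where "A = submatrix M I {..<m}"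
  have cr: "{i. i < dim_row M \<and> i \<in> I} = I" using I(1) dr by blast
  have cc: "{j. j < dim_col M \<and> j \<in> {..<m}} = {..<m}" using dc by blast
  have dA: "dim_row A = m" "dim_col A = m" unfolding A_def dim_submatrix cr cc using I(2) by simp_all
  have Ac: "A \<in> carrier_mat m m" using dA by (rule carrier_matI)
  have ent: "A $$ (k, j) = M $$ (pick I k, j)" if "k < m" "j < m" for k j
  proof -
    have "A $$ (k, j) = M $$ (pick I k, pick {..<m} j)" unfolding A_def
      by (rule submatrix_index) (simp_all only: cr cc I(2) that card_lessThan)
    then show ?thesis using pick_lessThan[OF that(2)] by simp
  qed
  have "A *\<^sub>v vec m x = 0\<^sub>v m"
  proof (rule eq_vecI)
    fix k assume k: "k < dim_vec (0\<^sub>v m :: 'a vec)"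
    then have km: "k < m" by simp
    have pk: "pick I k \<in> I" using pick_in_set_le[of k I] km I(2) by simp
    have "(A *\<^sub>v vec m x) $ k = row A k \<bullet> vec m x"
      by (rule index_mult_mat_vec) (simp only: dA km)
    also have "\<dots> = (\<Sum>j\<in>{0..<m}. row A k $ j * vec m x $ j)" by (simp add: scalar_prod_def)
    also have "\<dots> = (\<Sum>j<m. M $$ (pick I k, j) * x j)"
      unfolding atLeast0LessThan
    proof (rule sum.cong)
      fix j assume "j \<in> {..<m}"
      then have j: "j < m" by simp
      show "row A k $ j * vec m x $ j = M $$ (pick I k, j) * x j"
        using ent[OF km j] j km dA by simp
    qed simp
    also have "\<dots> = 0" using eq[OF pk] .
    finally show "(A *\<^sub>v vec m x) $ k = 0\<^sub>v m $ k" using km by simp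
  next
    show "dim_vec (A *\<^sub>v vec m x) = dim_vec (0\<^sub>v m :: 'a vec)" using dA by simp
  qed
  then have V: "vec m x = 0\<^sub>v m"
    using invertible_kernel[of A m "vec m x"] inv Ac unfolding A_def by simp
  show ?thesis
  proof (intro allI impI)
    fix i assume i: "i < m"
    have "vec m x $ i = (0\<^sub>v m :: 'a vec) $ i" using V by simp
    then show "x i = 0" using i by simp
  qed
qed

theorem mainTheorem8:
  fixes emb :: "'k::{finite,field} \<Rightarrow> 'e::field"
    and ev :: "nat \<Rightarrow> 'e \<Rightarrow> 'k"
    and Ov :: "nat \<Rightarrow> 'e set"
    and z :: 'e and zQ :: 'k and \<omega> :: "nat \<Rightarrow> 'e"
    and r t s u :: nat
  assumes r2: "r \<ge> 2"
    and t: "1 \<le> t" "t \<le> s"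
    and u: "1 \<le> u" "u \<le> s"
    and emb_hom: "\<And>x y. emb (x + y) = emb x + emb y" "\<And>x y. emb (x * y) = emb x * emb y"
                 "emb 1 = 1"
    and O_ring: "\<And>v x y. v \<le> r \<Longrightarrow> x \<in> Ov v \<Longrightarrow> y \<in> Ov v \<Longrightarrow> x + y \<in> Ov v"
                "\<And>v x y. v \<le> r \<Longrightarrow> x \<in> Ov v \<Longrightarrow> y \<in> Ov v \<Longrightarrow> x * y \<in> Ov v"
    and O_contains: "\<And>v c. v \<le> r \<Longrightarrow> emb c \<in> Ov v" "\<And>v. v \<le> r \<Longrightarrow> z \<in> Ov v"
                    "\<And>v i. v \<le> r \<Longrightarrow> i < r \<Longrightarrow> \<omega> i \<in> Ov v"
    and ev_hom: "\<And>v x y. v \<le> r \<Longrightarrow> x \<in> Ov v \<Longrightarrow> y \<in> Ov v \<Longrightarrow> ev v (x + y) = ev v x + ev v y"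
                "\<And>v x y. v \<le> r \<Longrightarrow> x \<in> Ov v \<Longrightarrow> y \<in> Ov v \<Longrightarrow> ev v (x * y) = ev v x * ev v y"
                "\<And>v c. v \<le> r \<Longrightarrow> ev v (emb c) = c"
    and z_over_Q: "\<And>v. v \<le> r \<Longrightarrow> ev v z = zQ"
    and omega0: "\<omega> 0 = 1"
    and M_inv: "\<And>I J. I \<subseteq> {..<r+1} \<Longrightarrow> J \<subseteq> {..<r} \<Longrightarrow> card I = r \<Longrightarrow> card J = r \<Longrightarrow>
                  invertible_mat (submatrix (M_mat ev \<omega> r) I J)"
    and M'_inv: "\<And>I J. I \<subseteq> {..<r+1} \<Longrightarrow> J \<subseteq> {..<r-1} \<Longrightarrow> card I = r - 1 \<Longrightarrow> card J = r - 1 \<Longrightarrow>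
                  invertible_mat (submatrix (M'_mat ev \<omega> r) I J)"
  shows "\<forall>a b K. K \<subseteq> {..<r+2} \<longrightarrow> card K = r \<longrightarrow>
           (\<forall>k\<in>K. B_vec ev emb z zQ \<omega> r t a k = B_vec ev emb z zQ \<omega> r t b k) \<longrightarrow>
           (\<forall>k<r+2. B_vec ev emb z zQ \<omega> r t a k = B_vec ev emb z zQ \<omega> r t b k)"
proof (rule allI, rule allI, rule allI, intro impI)
  fix a b :: "nat \<Rightarrow> nat \<Rightarrow> 'k" and K
  assume K: "K \<subseteq> {..<r+2}" "card K = r"
    and agree: "\<forall>k\<in>K. B_vec ev emb z zQ \<omega> r t a k = B_vec ev emb z zQ \<omega> r t b k"
  define c where "c a i = (if i = 0 then (\<Sum>j<t. a 0 j * zQ ^ j) else (\<Sum>j<t-1. a i j * zQ ^ j))"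
    for a :: "nat \<Rightarrow> nat \<Rightarrow> 'k" and i
  define e where "e v i = ev v (\<omega> i)" for v i
  have emb0: "emb 0 = 0"
  proof -
    have "emb 0 + emb 0 = emb 0 + 0" using emb_hom(1)[of 0 0] by simp
    then show ?thesis by (rule add_left_imp_eq)
  qed
  have O0: "0 \<in> Ov v" if "v \<le> r" for v using O_contains(1)[OF that, of 0] emb0 by simp
  have ev0: "ev v 0 = 0" if "v \<le> r" for v using ev_hom(3)[OF that, of 0] emb0 by simp
  have Osum: "(\<Sum>x\<in>A. g x) \<in> Ov v \<and> ev v (\<Sum>x\<in>A. g x) = (\<Sum>x\<in>A. ev v (g x))"
    if "v \<le> r" "finite A" "\<And>x. x \<in> A \<Longrightarrow> g x \<in> Ov v" for v and A :: "nat set" and g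
    using that(2,3)
  proof (induction A rule: finite_induct)
    case empty then show ?case using O0 ev0 that(1) by simp
  next
    case (insert x F)
    then show ?case using O_ring(1)[OF that(1)] ev_hom(1)[OF that(1)] by simp
  qed
  have zpow: "z ^ j \<in> Ov v \<and> ev v (z ^ j) = zQ ^ j" if "v \<le> r" for v j
  proof (induction j)
    case 0 then show ?case using O_contains(1)[OF that, of 1] ev_hom(3)[OF that, of 1] emb_hom(3) by simp
  next
    case (Suc j) then show ?case
      using O_ring(2)[OF that] ev_hom(2)[OF that] O_contains(2)[OF that] z_over_Q[OF that]
      by (simp add: mult.commute)
  qed
  have tm: "emb x * z ^ j \<in> Ov v \<and> ev v (emb x * z ^ j) = x * zQ ^ j" if "v \<le> r" for v x j
  proof -
    have E: "emb x \<in> Ov v" using O_contains(1)[OF that] .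
    have Z: "z ^ j \<in> Ov v" "ev v (z ^ j) = zQ ^ j" using zpow[OF that, of j] by auto
    show ?thesis using O_ring(2)[OF that E Z(1)] ev_hom(2)[OF that E Z(1)] Z(2) ev_hom(3)[OF that] by simp
  qed
  have e0: "e v 0 = 1" if "v \<le> r" for v
    unfolding e_def omega0 using ev_hom(3)[OF that, of 1] emb_hom(3) by simp
  have evf: "B_vec ev emb z zQ \<omega> r t a v = (\<Sum>i<r. c a i * e v i)" if "v \<le> r" for a v
  proof -
    have s0: "(\<Sum>j<t. emb (a 0 j) * z ^ j) \<in> Ov v \<and> ev v (\<Sum>j<t. emb (a 0 j) * z ^ j) = c a 0"
      using Osum[OF that, of "{..<t}" "\<lambda>j. emb (a 0 j) * z ^ j"] tm[OF that] unfolding c_def by simp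
    have si: "(\<Sum>j<t-1. emb (a i j) * z ^ j) * \<omega> i \<in> Ov v \<and> ev v ((\<Sum>j<t-1. emb (a i j) * z ^ j) * \<omega> i) = c a i * e v i"
      if "i \<in> {1..r-1}" for i
    proof -
      have "(\<Sum>j<t-1. emb (a i j) * z ^ j) \<in> Ov v \<and> ev v (\<Sum>j<t-1. emb (a i j) * z ^ j) = c a i"
        using Osum[OF \<open>v \<le> r\<close>, of "{..<t-1}" "\<lambda>j. emb (a i j) * z ^ j"] tm[OF \<open>v \<le> r\<close>] that unfolding c_def by simp
      moreover have "\<omega> i \<in> Ov v" using O_contains(3)[OF \<open>v \<le> r\<close>, of i] that r2 by auto
      ultimately show ?thesis using O_ring(2)[OF \<open>v \<le> r\<close>] ev_hom(2)[OF \<open>v \<le> r\<close>] unfolding e_def by simp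
    qed
    have s1: "(\<Sum>i\<in>{1..r-1}. (\<Sum>j<t-1. emb (a i j) * z ^ j) * \<omega> i) \<in> Ov v \<and>
       ev v (\<Sum>i\<in>{1..r-1}. (\<Sum>j<t-1. emb (a i j) * z ^ j) * \<omega> i) = (\<Sum>i\<in>{1..r-1}. c a i * e v i)"
      using Osum[OF that, of "{1..r-1}" "\<lambda>i. (\<Sum>j<t-1. emb (a i j) * z ^ j) * \<omega> i"] si by simp
    have split: "{..<r} = insert 0 {1..r-1}" using r2 by auto
    have "B_vec ev emb z zQ \<omega> r t a v = c a 0 + (\<Sum>i\<in>{1..r-1}. c a i * e v i)"
      unfolding B_vec_def f_vec_def using that s0 s1 ev_hom(1)[OF that] by simp
    also have "\<dots> = (\<Sum>i<r. c a i * e v i)" unfolding split using e0[OF that] by simp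
    finally show ?thesis .
  qed
  have Blast: "B_vec ev emb z zQ \<omega> r t a (r+1) = c a 0" for a unfolding B_vec_def c_def by simp
  define d where "d i = c a i - c b i" for i
  have diff: "B_vec ev emb z zQ \<omega> r t a v - B_vec ev emb z zQ \<omega> r t b v = (\<Sum>i<r. d i * e v i)"
    if "v \<le> r" for v
    unfolding evf[OF that] d_def by (simp add: sum_subtractf left_diff_distrib)
  have dz: "\<forall>i<r. d i = 0"
  proof (cases "r+1 \<in> K")
    case False
    have KI: "K \<subseteq> {..<r+1}"
    proof
      fix k assume "k \<in> K"
      then have "k < r+2" "k \<noteq> r+1" using K(1) False by blast+
      then show "k \<in> {..<r+1}" by simp
    qed
    have M: "dim_row (M_mat ev \<omega> r) = r+1" "dim_col (M_mat ev \<omega> r) = r"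
      unfolding M_mat_def by simp_all
    show ?thesis
    proof (rule kernel_sub[OF M KI K(2) M_inv[OF KI _ K(2) _]])
      fix v assume v: "v \<in> K"
      then have vr: "v \<le> r" using KI by fastforce
      have "(\<Sum>j<r. M_mat ev \<omega> r $$ (v,j) * d j) = (\<Sum>j<r. d j * e v j)"
      proof (rule sum.cong)
        fix j assume "j \<in> {..<r}"
        then show "M_mat ev \<omega> r $$ (v,j) * d j = d j * e v j"
          using vr unfolding M_mat_def e_def by (simp add: mult.commute)
      qed simp
      also have "\<dots> = 0" using diff[OF vr] agree v by simp
      finally show "(\<Sum>j<r. M_mat ev \<omega> r $$ (v,j) * d j) = 0" .
    qed simp_all
  next
    case True
    have "B_vec ev emb z zQ \<omega> r t a (r+1) = B_vec ev emb z zQ \<omega> r t b (r+1)" using agree True by blast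
    then have d0: "d 0 = 0" unfolding Blast d_def by simp
    define I where "I = K - {r+1}"
    have KI: "I \<subseteq> {..<r+1}"
    proof
      fix k assume "k \<in> I"
      then have "k < r+2" "k \<noteq> r+1" using K(1) unfolding I_def by blast+
      then show "k \<in> {..<r+1}" by simp
    qed
    have fK: "finite K" using K(1) by (rule finite_subset) simp
    have cI: "card I = r - 1" unfolding I_def using card_Diff_singleton[OF True] K(2) by simp
    have M: "dim_row (M'_mat ev \<omega> r) = r+1" "dim_col (M'_mat ev \<omega> r) = r-1"
      unfolding M'_mat_def by simp_all
    have "\<forall>j<r-1. d (j+1) = 0"
    proof (rule kernel_sub[OF M KI cI M'_inv[OF KI _ cI _]])
      fix v assume v: "v \<in> I"
      then have vr: "v \<le> r" using KI by fastforce
      have vK: "v \<in> K" using v unfolding I_def by blast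
      have "(\<Sum>j<r-1. M'_mat ev \<omega> r $$ (v,j) * d (j+1)) = (\<Sum>j<r-1. d (Suc j) * e v (Suc j))"
      proof (rule sum.cong)
        fix j assume "j \<in> {..<r-1}"
        then show "M'_mat ev \<omega> r $$ (v,j) * d (j+1) = d (Suc j) * e v (Suc j)"
          using vr unfolding M'_mat_def e_def by (simp add: mult.commute)
      qed simp
      also have "\<dots> = (\<Sum>j<Suc (r-1). d j * e v j)"
        unfolding sum.lessThan_Suc_shift using d0 by simp
      also have "\<dots> = (\<Sum>j<r. d j * e v j)" using r2 by simp
      also have "\<dots> = 0" using diff[OF vr] agree vK by simp
      finally show "(\<Sum>j<r-1. M'_mat ev \<omega> r $$ (v,j) * d (j+1)) = 0" .
    qed simp_all
    then have D: "d (i+1) = 0" if "i < r-1" for i using that by blast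
    show ?thesis
    proof (intro allI impI)
      fix i assume i: "i < r"
      show "d i = 0"
      proof (cases i)
        case 0 then show ?thesis using d0 by simp
      next
        case (Suc m) then have "m < r - 1" using i by simp
        then show ?thesis using D[of m] Suc by simp
      qed
    qed
  qed
  show "\<forall>k<r+2. B_vec ev emb z zQ \<omega> r t a k = B_vec ev emb z zQ \<omega> r t b k"
  proof (intro allI impI)
    fix k assume k: "k < r+2"
    show "B_vec ev emb z zQ \<omega> r t a k = B_vec ev emb z zQ \<omega> r t b k"
    proof (cases "k \<le> r")
      case True
      have "(\<Sum>i<r. d i * e k i) = 0" by (rule sum.neutral) (use dz in simp)
      then have "B_vec ev emb z zQ \<omega> r t a k - B_vec ev emb z zQ \<omega> r t b k = 0"
        using diff[OF True] by simp
      then show ?thesis by simp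
    next
      case False then have kk: "k = r+1" using k by simp
      have "d 0 = 0" using dz r2 by simp
      then have "c a 0 = c b 0" unfolding d_def by simp
      then show ?thesis unfolding kk Blast .
    qed
  qed
qed

end
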